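(* For $i\in\mathbb{N}$ let $\mathrm{pr}_i:\{0,1\}^{\mathbb{N}}\to\mathbb{R}$, $x\mapsto x_i$. For all $t\ge0$ and $f\in L^2$, \[ P_t\nabla_if=e^{-t}(p-\mathrm{pr}_i)\,P_t\Big(\frac{\nabla_if}{p-\mathrm{pr}_i}\Big). \] Consequently, $I_i(P_tf)=\mathbb{E}[|\nabla_iP_tf|]$ satisfies \[ I_i(P_tf)\le 2e^{-t}\max(p,1-p)\,I_i(f). \]
   Context: Fix $p\in(0,1)$, $\mathbb{N}=\{0,1,2,\dots\}$, $X=(X_i)_{i\in\mathbb{N}}$ i.i.d. Bernoulli($p$); $L^2$ is the set of $f:\{0,1\}^{\mathbb{N}}\to\mathbb{R}$ with $\mathbb{E}[f(X)^2]<\infty$. The bit-resampling process $(X^t)_{t\ge0}$ resamples each coordinate independently as a fresh Bernoulli($p$) at the rings of its own rate-$1$ Poisson clock; $P_tf(x)=\mathbb{E}[f(X^t)\mid X^0=x]$. $\sigma_i^\xi(x)$ is $x$ with coordinate $i$ set to $\xi$; $\nabla_if(x)=\mathbb{E}^\xi[f(\sigma_i^\xi(x))]-f(x)$ with $\xi\sim$ Bernoulli($p$). The influence is $I_i(f)=\mathbb{E}[|\nabla_if(X)|]$, which equals $\mathbb{E}\big[|\mathbb{E}[f(X)\mid(X_j)_{j\ne i}]-f(X)|\big]$. *)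

theory Defs
  imports "HOL-Probability.Probability"
begin

text \<open>Configurations in the hypercube {0,1}^N are functions nat => bool (True = 1).
  The base measure is the law of X = (X_i) i.i.d. Bernoulli(p).\<close>

definition bern_prod :: "real \<Rightarrow> (nat \<Rightarrow> bool) measure" where
  "bern_prod p = PiM UNIV (\<lambda>_. measure_pmf (bernoulli_pmf p))"

definition L2 :: "real \<Rightarrow> ((nat \<Rightarrow> bool) \<Rightarrow> real) set" where
  "L2 p = {f. f \<in> borel_measurable (bern_prod p) \<and> integrable (bern_prod p) (\<lambda>x. (f x)\<^sup>2)}"

definition pr :: "nat \<Rightarrow> (nat \<Rightarrow> bool) \<Rightarrow> real" where
  "pr i x = (if x i then 1 else 0)"

text \<open>Law at time t of one coordinate of the bit-resampling process started at b:
  with probability exp(-t) the rate-1 Poisson clock has not rung in [0,t] and the bit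
  is still b; otherwise the bit equals the (fresh Bernoulli(p)) value of the last resampling.\<close>
definition coord_kernel :: "real \<Rightarrow> real \<Rightarrow> bool \<Rightarrow> bool pmf" where
  "coord_kernel p t b =
     bind_pmf (bernoulli_pmf (exp (- t))) (\<lambda>no_ring. if no_ring then return_pmf b else bernoulli_pmf p)"

definition resample_kernel :: "real \<Rightarrow> real \<Rightarrow> (nat \<Rightarrow> bool) \<Rightarrow> (nat \<Rightarrow> bool) measure" where
  "resample_kernel p t x = PiM UNIV (\<lambda>j. measure_pmf (coord_kernel p t (x j)))"

definition Pt :: "real \<Rightarrow> real \<Rightarrow> ((nat \<Rightarrow> bool) \<Rightarrow> real) \<Rightarrow> (nat \<Rightarrow> bool) \<Rightarrow> real" where
  "Pt p t f x = (\<integral>y. f y \<partial>resample_kernel p t x)"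

definition nabla :: "real \<Rightarrow> nat \<Rightarrow> ((nat \<Rightarrow> bool) \<Rightarrow> real) \<Rightarrow> (nat \<Rightarrow> bool) \<Rightarrow> real" where
  "nabla p i f x = (\<integral>\<xi>. f (x(i := \<xi>)) \<partial>measure_pmf (bernoulli_pmf p)) - f x"

definition influence :: "real \<Rightarrow> nat \<Rightarrow> ((nat \<Rightarrow> bool) \<Rightarrow> real) \<Rightarrow> real" where
  "influence p i f = (\<integral>x. \<bar>nabla p i f x\<bar> \<partial>bern_prod p)"

end

theory Submission
  imports Defs
begin

definition PM :: "(nat \<Rightarrow> bool pmf) \<Rightarrow> (nat \<Rightarrow> bool) measure" where
  "PM Q = PiM UNIV (\<lambda>j. measure_pmf (Q j))"

definition RM :: "nat \<Rightarrow> (nat \<Rightarrow> bool pmf) \<Rightarrow> (nat \<Rightarrow> bool) measure" where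
  "RM i Q = PiM (UNIV - {i}) (\<lambda>j. measure_pmf (Q j))"

lemma space_PM[simp]: "space (PM Q) = UNIV"
  by (simp add: PM_def space_PiM)

lemma sets_PM: "sets (PM Q) = sets (PM Q')"
  unfolding PM_def by (rule sets_PiM_cong) auto

lemma measurable_PM_cong[measurable_cong]: "sets (PM Q) = sets (PM (\<lambda>_. bernoulli_pmf 0))"
  by (rule sets_PM)

lemma prob_space_PM: "prob_space (PM Q)"
  unfolding PM_def by (rule prob_space_PiM) (simp add: prob_space_measure_pmf)

lemma prob_space_RM: "prob_space (RM i Q)"
  unfolding RM_def by (rule prob_space_PiM) (simp add: prob_space_measure_pmf)

lemma RM_cong: "(\<And>j. j \<noteq> i \<Longrightarrow> Q j = Q' j) \<Longrightarrow> RM i Q = RM i Q'"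
  unfolding RM_def by (rule PiM_cong) auto

lemma measurable_upd: "(\<lambda>(b, X). X(i := b)) \<in> measurable (measure_pmf A \<Otimes>\<^sub>M RM i Q) (PM Q')"
  unfolding PM_def RM_def
proof (rule measurable_PiM_single')
  fix j :: nat
  show "(\<lambda>\<omega>. (case \<omega> of (b, X) \<Rightarrow> X(i := b)) j) \<in> measurable (measure_pmf A \<Otimes>\<^sub>M Pi\<^sub>M (UNIV - {i}) (\<lambda>j. measure_pmf (Q j))) (measure_pmf (Q' j))"
  proof (cases "j = i")
    case True
    have eq: "(\<lambda>\<omega>. (case \<omega> of (b, X) \<Rightarrow> X(i := b)) j) = (\<lambda>\<omega>. id (fst \<omega>))"
      using True by auto
    show ?thesis by (subst eq) (rule measurable_fst'', simp)
  next
    case False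
    have eq: "(\<lambda>\<omega>. (case \<omega> of (b, X) \<Rightarrow> X(i := b)) j) = (\<lambda>\<omega>. id ((snd \<omega>) j))"
      using False by auto
    have "(\<lambda>X. X j) \<in> measurable (Pi\<^sub>M (UNIV - {i}) (\<lambda>j. measure_pmf (Q j))) (measure_pmf (Q j))"
      using False by (intro measurable_component_singleton) auto
    then have "(\<lambda>X. id (X j)) \<in> measurable (Pi\<^sub>M (UNIV - {i}) (\<lambda>j. measure_pmf (Q j))) (measure_pmf (Q' j))"
      by (rule measurable_compose) simp
    then show ?thesis by (subst eq) (rule measurable_snd'')
  qed
qed (auto simp: space_PiM space_pair_measure)

lemma measurable_upd1: "(\<lambda>X. X(i := b)) \<in> measurable (RM i Q) (PM Q')"
  unfolding PM_def RM_def
  by (rule measurable_PiM_single') (auto simp: space_PiM)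

lemma measurable_upd2: "(\<lambda>X. X(i := b)) \<in> measurable (PM Q) (PM Q')"
  unfolding PM_def
  by (rule measurable_PiM_single') (auto simp: space_PiM)

lemma PM_split: "PM Q = distr (measure_pmf (Q i) \<Otimes>\<^sub>M RM i Q) (PM Q) (\<lambda>(b, X). X(i := b))"
proof -
  have "insert i (UNIV - {i}) = UNIV" by auto
  then show ?thesis
    using distr_pair_PiM_eq_PiM[of "UNIV - {i}" "\<lambda>j. measure_pmf (Q j)" i]
    unfolding PM_def RM_def by (simp add: prob_space_measure_pmf)
qed

lemma pair_sf_QR: "pair_sigma_finite (measure_pmf A) (RM i Q)"
  by (intro pair_sigma_finite.intro prob_space_imp_sigma_finite prob_space_RM prob_space_measure_pmf)

lemma PM_split_eq: "PM Q = distr (measure_pmf (Q i) \<Otimes>\<^sub>M RM i Q) (PM Q) (\<lambda>(b, X). X(i := b))"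
  by (rule PM_split)

lemma nn_split:
  assumes h[measurable]: "h \<in> borel_measurable (PM Q)"
  shows "(\<integral>\<^sup>+y. h y \<partial>PM Q) = (\<integral>\<^sup>+b. \<integral>\<^sup>+X. h (X(i := b)) \<partial>RM i Q \<partial>measure_pmf (Q i))"
proof -
  interpret R: prob_space "RM i Q" by (rule prob_space_RM)
  have "(\<integral>\<^sup>+y. h y \<partial>PM Q) = (\<integral>\<^sup>+y. h y \<partial>distr (measure_pmf (Q i) \<Otimes>\<^sub>M RM i Q) (PM Q) (\<lambda>(b, X). X(i := b)))"
    using PM_split_eq[of Q i] by (rule arg_cong)
  also have "\<dots> = (\<integral>\<^sup>+z. h ((\<lambda>(b, X). X(i := b)) z) \<partial>(measure_pmf (Q i) \<Otimes>\<^sub>M RM i Q))"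
    by (rule nn_integral_distr[OF measurable_upd]) simp
  also have "\<dots> = (\<integral>\<^sup>+b. \<integral>\<^sup>+X. h (X(i := b)) \<partial>RM i Q \<partial>measure_pmf (Q i))"
    by (subst R.nn_integral_fst[symmetric]) (auto intro: measurable_compose[OF measurable_upd h])
  finally show ?thesis .
qed

lemma int_split:
  fixes g :: "(nat \<Rightarrow> bool) \<Rightarrow> real"
  assumes g[measurable]: "g \<in> borel_measurable (PM Q)"
  shows "integral\<^sup>L (PM Q) g = (\<integral>z. g ((\<lambda>(b, X). X(i := b)) z) \<partial>(measure_pmf (Q i) \<Otimes>\<^sub>M RM i Q))"
    and "integrable (PM Q) g \<longleftrightarrow> integrable (measure_pmf (Q i) \<Otimes>\<^sub>M RM i Q) (\<lambda>z. g ((\<lambda>(b, X). X(i := b)) z))"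
proof -
  have "integral\<^sup>L (PM Q) g = integral\<^sup>L (distr (measure_pmf (Q i) \<Otimes>\<^sub>M RM i Q) (PM Q) (\<lambda>(b, X). X(i := b))) g"
    using PM_split_eq[of Q i] by (rule arg_cong)
  also have "\<dots> = (\<integral>z. g ((\<lambda>(b, X). X(i := b)) z) \<partial>(measure_pmf (Q i) \<Otimes>\<^sub>M RM i Q))"
    by (rule integral_distr[OF measurable_upd g])
  finally show "integral\<^sup>L (PM Q) g = (\<integral>z. g ((\<lambda>(b, X). X(i := b)) z) \<partial>(measure_pmf (Q i) \<Otimes>\<^sub>M RM i Q))" .
  have "integrable (PM Q) g = integrable (distr (measure_pmf (Q i) \<Otimes>\<^sub>M RM i Q) (PM Q) (\<lambda>(b, X). X(i := b))) g"
    using PM_split_eq[of Q i] by (rule arg_cong)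
  also have "\<dots> = integrable (measure_pmf (Q i) \<Otimes>\<^sub>M RM i Q) (\<lambda>z. g ((\<lambda>(b, X). X(i := b)) z))"
    by (rule integrable_distr_eq[OF measurable_upd g])
  finally show "integrable (PM Q) g \<longleftrightarrow> integrable (measure_pmf (Q i) \<Otimes>\<^sub>M RM i Q) (\<lambda>z. g ((\<lambda>(b, X). X(i := b)) z))" .
qed

lemma slice_integrable:
  fixes g :: "(nat \<Rightarrow> bool) \<Rightarrow> real"
  assumes g[measurable]: "g \<in> borel_measurable (PM Q)" and int: "integrable (PM Q) g"
    and b: "b \<in> set_pmf (Q i)"
  shows "integrable (RM i Q) (\<lambda>X. g (X(i := b)))"
proof -
  interpret P: pair_sigma_finite "measure_pmf (Q i)" "RM i Q" by (rule pair_sf_QR)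
  have "integrable (measure_pmf (Q i) \<Otimes>\<^sub>M RM i Q) (\<lambda>z. g ((\<lambda>(b, X). X(i := b)) z))"
    using int int_split(2)[OF g, of i] by simp
  from P.AE_integrable_fst'[OF this] b show ?thesis
    by (simp add: AE_measure_pmf_iff)
qed

lemma slices_integral:
  fixes g :: "(nat \<Rightarrow> bool) \<Rightarrow> real"
  assumes g[measurable]: "g \<in> borel_measurable (PM Q)"
    and sl: "\<And>b. integrable (RM i Q) (\<lambda>X. g (X(i := b)))"
  shows "integrable (PM Q) g"
    and "integral\<^sup>L (PM Q) g = (\<Sum>b\<in>UNIV. pmf (Q i) b * (\<integral>X. g (X(i := b)) \<partial>RM i Q))"
proof -
  interpret P: pair_sigma_finite "measure_pmf (Q i)" "RM i Q" by (rule pair_sf_QR)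
  have gm: "(\<lambda>z. g ((\<lambda>(b, X). X(i := b)) z)) \<in> borel_measurable (measure_pmf (Q i) \<Otimes>\<^sub>M RM i Q)"
    by (rule measurable_compose[OF measurable_upd g])
  have pint: "integrable (measure_pmf (Q i) \<Otimes>\<^sub>M RM i Q) (\<lambda>z. g ((\<lambda>(b, X). X(i := b)) z))"
    by (rule P.Fubini_integrable[OF gm]) (auto intro!: integrable_measure_pmf_finite sl simp: AE_measure_pmf_iff)
  then show "integrable (PM Q) g" using int_split(2)[OF g, of i] by simp
  have "integral\<^sup>L (PM Q) g = (\<integral>z. g ((\<lambda>(b, X). X(i := b)) z) \<partial>(measure_pmf (Q i) \<Otimes>\<^sub>M RM i Q))"
    by (rule int_split(1)[OF g])
  also have "\<dots> = (\<integral>b. (\<integral>X. g (X(i := b)) \<partial>RM i Q) \<partial>measure_pmf (Q i))"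
    using P.integral_fst'[OF pint] by simp
  also have "\<dots> = (\<Sum>b\<in>UNIV. pmf (Q i) b * (\<integral>X. g (X(i := b)) \<partial>RM i Q))"
    by (subst integral_measure_pmf[of UNIV]) (auto simp: mult.commute)
  finally show "integral\<^sup>L (PM Q) g = (\<Sum>b\<in>UNIV. pmf (Q i) b * (\<integral>X. g (X(i := b)) \<partial>RM i Q))" .
qed

lemma prod_emb_PM: "prod_emb UNIV (\<lambda>j. measure_pmf (Q j)) J S = prod_emb UNIV (\<lambda>j. measure_pmf (Q' j)) J S"
  by (simp add: prod_emb_def)

lemma emeasure_PM_emb:
  assumes "finite J"
  shows "emeasure (PM Q) (prod_emb UNIV (\<lambda>j. measure_pmf (Q' j)) J (Pi\<^sub>E J E)) = (\<Prod>j\<in>J. emeasure (measure_pmf (Q j)) (E j))"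
  unfolding PM_def prod_emb_PM[of Q' J _ Q]
  by (rule emeasure_PiM_emb) (auto simp: assms prob_space_measure_pmf)

lemma comp_meas: "(\<lambda>x. F (x j)) \<in> borel_measurable (PM Q)"
proof -
  have "(\<lambda>x. x j) \<in> measurable (PM Q) (measure_pmf (Q j))"
    unfolding PM_def by (rule measurable_component_singleton) simp
  then show ?thesis by (rule measurable_compose) simp
qed

lemma kernel_measurable:
  "(\<lambda>x. PM (\<lambda>j. \<kappa> (x j))) \<in> measurable (PM Q) (subprob_algebra (PM Q'))"
proof (rule measurable_subprob_algebra_generated[where \<Omega>=UNIV and G="prod_algebra UNIV (\<lambda>j. measure_pmf (Q' j))"])
  show "sets (PM Q') = sigma_sets UNIV (prod_algebra UNIV (\<lambda>j. measure_pmf (Q' j)))"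
    unfolding PM_def by (subst sets_PiM) (simp add: PiE_UNIV_domain)
  show "Int_stable (prod_algebra UNIV (\<lambda>j. measure_pmf (Q' j)))"
    by (rule Int_stable_prod_algebra)
  show "prod_algebra UNIV (\<lambda>j. measure_pmf (Q' j)) \<subseteq> Pow UNIV" by simp
  show "subprob_space (PM (\<lambda>j. \<kappa> (a j)))" for a
    by (rule prob_space_imp_subprob_space, rule prob_space_PM)
  show "sets (PM (\<lambda>j. \<kappa> (a j))) = sets (PM Q')" for a by (rule sets_PM)
  show "(\<lambda>a. emeasure (PM (\<lambda>j. \<kappa> (a j))) UNIV) \<in> borel_measurable (PM Q)"
  proof -
    have "emeasure (PM (\<lambda>j. \<kappa> (a j))) UNIV = 1" for a
      using prob_space.emeasure_space_1[OF prob_space_PM, of "\<lambda>j. \<kappa> (a j)"] by simp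
    then show ?thesis by simp
  qed
  fix A assume "A \<in> prod_algebra UNIV (\<lambda>j. measure_pmf (Q' j))"
  then obtain J E where A: "A = prod_emb UNIV (\<lambda>j. measure_pmf (Q' j)) J (Pi\<^sub>E J E)" and J: "finite J"
    by (auto elim!: prod_algebraE)
  have "(\<lambda>a. \<Prod>j\<in>J. emeasure (measure_pmf (\<kappa> (a j))) (E j)) \<in> borel_measurable (PM Q)"
    by (intro borel_measurable_prod_ennreal comp_meas)
  then show "(\<lambda>a. emeasure (PM (\<lambda>j. \<kappa> (a j))) A) \<in> borel_measurable (PM Q)"
    unfolding A emeasure_PM_emb[OF J] .
qed

lemma inv_split:
  fixes h :: "(nat \<Rightarrow> bool) \<Rightarrow> ennreal"
  assumes h[measurable]: "h \<in> borel_measurable (PM Q)"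
    and inv: "\<And>y c. h (y(i := c)) = h y"
  shows "(\<integral>\<^sup>+y. u (y i) * h y \<partial>PM Q) = (\<integral>\<^sup>+b. u b \<partial>measure_pmf (Q i)) * (\<integral>\<^sup>+y. h y \<partial>PM Q)"
proof -
  interpret R: prob_space "RM i Q" by (rule prob_space_RM)

  define h0 where "h0 X = h (X(i := False))" for X
  have h0m: "h0 \<in> borel_measurable (RM i Q)"
    unfolding h0_def by (rule measurable_compose[OF measurable_upd1 h])
  define H where "H = (\<integral>\<^sup>+X. h0 X \<partial>RM i Q)"
  have hb: "h (X(i := b)) = h0 X" for X b
    unfolding h0_def using inv[of "X(i := b)" False] by simp
  have um: "(\<lambda>y. u (y i) * h y) \<in> borel_measurable (PM Q)"
    by (intro borel_measurable_times_ennreal comp_meas h)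
  have "(\<integral>\<^sup>+y. u (y i) * h y \<partial>PM Q) = (\<integral>\<^sup>+b. \<integral>\<^sup>+X. u b * h0 X \<partial>RM i Q \<partial>measure_pmf (Q i))"
    by (subst nn_split[OF um, of i]) (simp only: hb fun_upd_same)
  also have "\<dots> = (\<integral>\<^sup>+b. u b * H \<partial>measure_pmf (Q i))"
    unfolding H_def
    by (intro nn_integral_cong nn_integral_cmult h0m)
  also have "\<dots> = (\<integral>\<^sup>+b. u b \<partial>measure_pmf (Q i)) * H"
    by (rule nn_integral_multc) simp
  also have "H = (\<integral>\<^sup>+y. h y \<partial>PM Q)"
    by (subst nn_split[OF h, of i]) (simp add: hb H_def measure_pmf.emeasure_space_1)
  finally show ?thesis .
qed

lemma prod_integral:
  assumes "finite J"
  shows "(\<integral>\<^sup>+y. (\<Prod>j\<in>J. c j (y j)) \<partial>PM Q) = (\<Prod>j\<in>J. \<integral>\<^sup>+b. c j b \<partial>measure_pmf (Q j))"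
  using assms
proof (induction J rule: finite_induct)
  case empty
  then show ?case
    using prob_space.emeasure_space_1[OF prob_space_PM, of Q] by simp
next
  case (insert i J)
  have m: "(\<lambda>y. \<Prod>j\<in>J. c j (y j)) \<in> borel_measurable (PM Q)"
    by (intro borel_measurable_prod_ennreal comp_meas)
  have inv: "(\<Prod>j\<in>J. c j ((y(i := b)) j)) = (\<Prod>j\<in>J. c j (y j))" for y b
    using insert(2) by (intro prod.cong) auto
  have "(\<integral>\<^sup>+y. (\<Prod>j\<in>insert i J. c j (y j)) \<partial>PM Q) = (\<integral>\<^sup>+y. c i (y i) * (\<Prod>j\<in>J. c j (y j)) \<partial>PM Q)"
    using insert by simp
  also have "\<dots> = (\<integral>\<^sup>+b. c i b \<partial>measure_pmf (Q i)) * (\<integral>\<^sup>+y. (\<Prod>j\<in>J. c j (y j)) \<partial>PM Q)"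
    by (rule inv_split[OF m]) (rule inv)
  finally show ?case using insert by simp
qed

lemma stationary:
  assumes bq: "bind_pmf q \<kappa> = q"
  shows "bind (PM (\<lambda>_. q)) (\<lambda>x. PM (\<lambda>j. \<kappa> (x j))) = PM (\<lambda>_. q)"
proof -
  have km: "(\<lambda>x. PM (\<lambda>j. \<kappa> (x j))) \<in> measurable (PM (\<lambda>_. q)) (subprob_algebra (PM (\<lambda>_. q)))"
    by (rule kernel_measurable)
  have bq_int: "(\<integral>\<^sup>+b. emeasure (measure_pmf (\<kappa> b)) X \<partial>measure_pmf q) = emeasure (measure_pmf q) X" for X
  proof -
    have "emeasure (measure_pmf q) X = emeasure (measure_pmf (bind_pmf q \<kappa>)) X"
      by (simp only: bq)
    also have "\<dots> = (\<integral>\<^sup>+b. emeasure (measure_pmf (\<kappa> b)) X \<partial>measure_pmf q)"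
      by (rule emeasure_bind_pmf)
    finally show ?thesis by (rule sym)
  qed
  have sb: "sets (bind (PM (\<lambda>_. q)) (\<lambda>x. PM (\<lambda>j. \<kappa> (x j)))) = sets (PM (\<lambda>_. q))"
    by (rule sets_bind) (rule sets_PM, simp)
  have sub: "subprob_space (bind (PM (\<lambda>_. q)) (\<lambda>x. PM (\<lambda>j. \<kappa> (x j))))"
    by (rule subprob_space_bind[OF prob_space_imp_subprob_space[OF prob_space_PM] km])
  show ?thesis
    unfolding PM_def[of "\<lambda>_. q"]
  proof (rule measure_eqI_PiM_infinite[where I=UNIV and M="\<lambda>_. measure_pmf q"])
    show "sets (bind (PiM UNIV (\<lambda>_. measure_pmf q)) (\<lambda>x. PM (\<lambda>j. \<kappa> (x j)))) = sets (PiM UNIV (\<lambda>_. measure_pmf q))"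
      using sb unfolding PM_def by simp
    show "sets (PiM UNIV (\<lambda>_. measure_pmf q)) = sets (PiM UNIV (\<lambda>_. measure_pmf q))" ..
    show "finite_measure (bind (PiM UNIV (\<lambda>_. measure_pmf q)) (\<lambda>x. PM (\<lambda>j. \<kappa> (x j))))"
      using sub unfolding PM_def[of "\<lambda>_. q"] by (rule subprob_space.axioms(1))
    fix A :: "nat \<Rightarrow> bool set" and J :: "nat set" assume J: "finite J" "J \<subseteq> UNIV" and A: "\<And>i. i \<in> J \<Longrightarrow> A i \<in> sets (measure_pmf q)"
    let ?C = "prod_emb UNIV (\<lambda>_. measure_pmf q) J (Pi\<^sub>E J A)"
    have "emeasure (bind (PM (\<lambda>_. q)) (\<lambda>x. PM (\<lambda>j. \<kappa> (x j)))) ?C = (\<integral>\<^sup>+x. emeasure (PM (\<lambda>j. \<kappa> (x j))) ?C \<partial>PM (\<lambda>_. q))"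
      by (rule emeasure_bind[OF _ km]) (simp, unfold PM_def, intro sets_PiM_I, use J in auto)
    also have "\<dots> = (\<integral>\<^sup>+x. (\<Prod>j\<in>J. emeasure (measure_pmf (\<kappa> (x j))) (A j)) \<partial>PM (\<lambda>_. q))"
      by (intro nn_integral_cong emeasure_PM_emb J(1))
    also have "\<dots> = (\<Prod>j\<in>J. \<integral>\<^sup>+b. emeasure (measure_pmf (\<kappa> b)) (A j) \<partial>measure_pmf q)"
      by (rule prod_integral[OF J(1), where c="\<lambda>j b. emeasure (measure_pmf (\<kappa> b)) (A j)" and Q="\<lambda>_. q"])
    also have "\<dots> = (\<Prod>j\<in>J. emeasure (measure_pmf q) (A j))"
      by (rule prod.cong[OF refl bq_int])
    also have "\<dots> = emeasure (PM (\<lambda>_. q)) ?C"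
      by (rule emeasure_PM_emb[OF J(1), symmetric])
    finally show "emeasure (bind (PiM UNIV (\<lambda>_. measure_pmf q)) (\<lambda>x. PM (\<lambda>j. \<kappa> (x j)))) ?C = emeasure (PiM UNIV (\<lambda>_. measure_pmf q)) ?C"
      unfolding PM_def[of "\<lambda>_. q"] .
  qed
qed

lemma bern_PM: "bern_prod p = PM (\<lambda>_. bernoulli_pmf p)"
  by (simp add: bern_prod_def PM_def)

lemma rk_PM: "resample_kernel p t x = PM (\<lambda>j. coord_kernel p t (x j))"
  by (simp add: resample_kernel_def PM_def)

lemma pmf_ck:
  assumes "0 \<le> p" "p \<le> 1" "0 \<le> t"
  shows "pmf (coord_kernel p t c) b = exp (-t) * (if b = c then 1 else 0) + (1 - exp (-t)) * pmf (bernoulli_pmf p) b"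
proof -
  have e: "0 \<le> exp (-t)" "exp (-t) \<le> 1" using assms by auto
  have e1: "pmf (bernoulli_pmf (exp (-t))) True = exp (-t)" "pmf (bernoulli_pmf (exp (-t))) False = 1 - exp (-t)"
    using e by simp_all
  have p1: "pmf (bernoulli_pmf p) True = p" "pmf (bernoulli_pmf p) False = 1 - p"
    using assms by simp_all
  show ?thesis
    unfolding coord_kernel_def pmf_bind
    by (subst integral_measure_pmf_real[of UNIV]) (auto simp: UNIV_bool e1 p1 indicator_def algebra_simps)
qed

lemma bind_ck:
  assumes "0 \<le> p" "p \<le> 1" "0 \<le> t"
  shows "bind_pmf (bernoulli_pmf p) (coord_kernel p t) = bernoulli_pmf p"
proof (rule pmf_eqI)
  fix b
  show "pmf (bind_pmf (bernoulli_pmf p) (coord_kernel p t)) b = pmf (bernoulli_pmf p) b"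
    unfolding pmf_bind
    by (subst integral_measure_pmf_real[of UNIV]) (cases b, auto simp: UNIV_bool pmf_ck assms algebra_simps)
qed

lemma nabla_formula:
  assumes "0 \<le> p" "p \<le> 1"
  shows "nabla p i g x = p * g (x(i := True)) + (1 - p) * g (x(i := False)) - g x"
  unfolding nabla_def
  by (subst integral_measure_pmf_real[of UNIV]) (auto simp: UNIV_bool assms)

lemma pr_meas[measurable]: "pr j \<in> borel_measurable (PM Q)"
proof -
  have "(\<lambda>x. (\<lambda>c. if c then 1 else (0::real)) (x j)) \<in> borel_measurable (PM Q)"
    by (rule comp_meas)
  then show ?thesis unfolding pr_def[abs_def] by simp
qed

context
  fixes p t :: real and i :: nat and f :: "(nat \<Rightarrow> bool) \<Rightarrow> real"
  assumes p0: "0 < p" and p1: "p < 1" and t0: "0 \<le> t"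
    and fm: "f \<in> borel_measurable (bern_prod p)"
begin

lemma fQ[measurable]: "f \<in> borel_measurable (PM Q)"
  using fm unfolding bern_PM
  by (subst measurable_cong_sets[OF sets_PM[of Q "\<lambda>_. bernoulli_pmf p"] refl])

lemma fupd_meas[measurable]: "(\<lambda>y. f (y(i := b))) \<in> borel_measurable (PM Q)"
  by (rule measurable_compose[OF measurable_upd2 fQ])

lemma fupd_measR[measurable]: "(\<lambda>y. f (y(i := b))) \<in> borel_measurable (RM i Q)"
  by (rule measurable_compose[OF measurable_upd1 fQ])

definition Df :: "(nat \<Rightarrow> bool) \<Rightarrow> real" where
  "Df y = f (y(i := True)) - f (y(i := False))"

lemma Df_upd[simp]: "Df (y(i := c)) = Df y"
  by (simp add: Df_def)

lemma Df_meas[measurable]: "Df \<in> borel_measurable (PM Q)"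
  unfolding Df_def[abs_def] by measurable

lemma Df_measR[measurable]: "Df \<in> borel_measurable (RM i Q)"
  unfolding Df_def[abs_def] by measurable

lemma nabla_eq: "nabla p i f y = (p - pr i y) * Df y"
  using p0 p1
  by (cases "y i") (auto simp: nabla_formula Df_def pr_def fun_upd_idem algebra_simps)

lemma pr_ne: "p - pr i y \<noteq> 0"
  using p0 p1 by (auto simp: pr_def)

lemma nablaD: "nabla p i f y / (p - pr i y) = Df y"
  using pr_ne[of y] by (simp add: nabla_eq)

lemma nabla_meas[measurable]: "nabla p i f \<in> borel_measurable (PM Q)"
proof -
  have "nabla p i f = (\<lambda>y. (p - pr i y) * Df y)" by (rule ext) (rule nabla_eq)
  then show ?thesis by simp
qed

lemma R_upd: "RM i (\<lambda>j. coord_kernel p t ((x(i := c)) j)) = RM i (\<lambda>j. coord_kernel p t (x j))"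
  by (rule RM_cong) auto

lemma Pt_Df_R: "Pt p t Df x = (\<integral>X. Df X \<partial>RM i (\<lambda>j. coord_kernel p t (x j)))"
proof (cases "integrable (RM i (\<lambda>j. coord_kernel p t (x j))) Df")
  case True
  have "Pt p t Df x = (\<Sum>b\<in>UNIV. pmf (coord_kernel p t (x i)) b * (\<integral>X. Df (X(i := b)) \<partial>RM i (\<lambda>j. coord_kernel p t (x j))))"
    unfolding Pt_def rk_PM by (rule slices_integral(2)) (simp_all add: True)
  also have "\<dots> = (\<Sum>b\<in>UNIV. pmf (coord_kernel p t (x i)) b) * (\<integral>X. Df X \<partial>RM i (\<lambda>j. coord_kernel p t (x j)))"
    by (simp add: sum_distrib_right)
  also have "(\<Sum>b\<in>UNIV. pmf (coord_kernel p t (x i)) b) = 1"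
    by (rule sum_pmf_eq_1) auto
  finally show ?thesis by simp
next
  case False
  obtain b where b: "b \<in> set_pmf (coord_kernel p t (x i))"
    using set_pmf_not_empty[of "coord_kernel p t (x i)"] by blast
  have "\<not> integrable (resample_kernel p t x) Df"
  proof
    assume "integrable (resample_kernel p t x) Df"
    then have "integrable (RM i (\<lambda>j. coord_kernel p t (x j))) (\<lambda>X. Df (X(i := b)))"
      using slice_integrable[where g=Df and Q="\<lambda>j. coord_kernel p t (x j)" and i=i and b=b] b Df_meas
      unfolding rk_PM by simp
    with False show False by simp
  qed
  then show ?thesis using False by (simp add: Pt_def not_integrable_integral_eq)
qed

lemma part1: "Pt p t (nabla p i f) x = exp (- t) * (p - pr i x) * Pt p t Df x"
proof -
  let ?R = "RM i (\<lambda>j. coord_kernel p t (x j))"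
  have ne: "nabla p i f = (\<lambda>y. (p - pr i y) * Df y)" by (rule ext) (rule nabla_eq)
  have e: "0 \<le> exp (-t)" "exp (-t) \<le> 1" using t0 by auto
  have pmf1: "pmf (coord_kernel p t c) True = exp (-t) * (if c then 1 else 0) + (1 - exp (-t)) * p"
    "pmf (coord_kernel p t c) False = exp (-t) * (if c then 0 else 1) + (1 - exp (-t)) * (1 - p)" for c
    using p0 p1 t0 by (simp_all add: pmf_ck)
  show ?thesis
  proof (cases "integrable ?R Df")
    case True
    have sl: "(\<lambda>X. (p - pr i (X(i := b))) * Df (X(i := b))) = (\<lambda>X. (p - (if b then 1 else 0)) * Df X)" for b
      by (auto simp: pr_def)
    have "Pt p t (nabla p i f) x = (\<Sum>b\<in>UNIV. pmf (coord_kernel p t (x i)) b * (\<integral>X. (p - pr i (X(i := b))) * Df (X(i := b)) \<partial>?R))"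
      unfolding Pt_def rk_PM ne by (rule slices_integral(2), measurable, simp add: True pr_def)
    also have "\<dots> = (\<Sum>b\<in>UNIV. pmf (coord_kernel p t (x i)) b * ((p - (if b then 1 else 0)) * (\<integral>X. Df X \<partial>?R)))"
      by (simp add: pr_def)
    also have "\<dots> = exp (- t) * (p - pr i x) * (\<integral>X. Df X \<partial>?R)"
      by (cases "x i") (simp_all add: UNIV_bool pmf1 pr_def algebra_simps)
    finally show ?thesis by (simp add: Pt_Df_R)
  next
    case False
    obtain b where b: "b \<in> set_pmf (coord_kernel p t (x i))"
      using set_pmf_not_empty[of "coord_kernel p t (x i)"] by blast
    have "\<not> integrable (resample_kernel p t x) (nabla p i f)"
    proof
      assume "integrable (resample_kernel p t x) (nabla p i f)"
      then have "integrable ?R (\<lambda>X. nabla p i f (X(i := b)))"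
        using slice_integrable[where g="nabla p i f" and Q="\<lambda>j. coord_kernel p t (x j)" and i=i and b=b] b nabla_meas
        unfolding rk_PM by simp
      then have "integrable ?R (\<lambda>X. (p - (if b then 1 else 0)) * Df X)"
        by (simp add: ne pr_def)
      moreover have "p - (if b then 1 else 0) \<noteq> 0" using p0 p1 by auto
      ultimately show False using False by simp
    qed
    then have "Pt p t (nabla p i f) x = 0" unfolding Pt_def by (rule not_integrable_integral_eq)
    moreover have "Pt p t Df x = 0" using False by (simp add: Pt_Df_R not_integrable_integral_eq)
    ultimately show ?thesis by simp
  qed
qed

end

context
  fixes p t :: real and i :: nat and f :: "(nat \<Rightarrow> bool) \<Rightarrow> real"
  assumes p0: "0 < p" and p1: "p < 1" and t0: "0 \<le> t"
    and fm: "f \<in> borel_measurable (bern_prod p)"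
    and fi: "integrable (bern_prod p) f"
begin

lemma fQ'[measurable]: "f \<in> borel_measurable (PM Q)"
  by (rule fQ[OF p0 p1 t0 fm])

lemma fupd_meas'[measurable]: "(\<lambda>y. f (y(i := b))) \<in> borel_measurable (PM Q)"
  by (rule measurable_compose[OF measurable_upd2 fQ'])

lemma fupd_measR'[measurable]: "(\<lambda>y. f (y(i := b))) \<in> borel_measurable (RM i Q)"
  by (rule measurable_compose[OF measurable_upd1 fQ'])

lemma f_int: "(\<integral>\<^sup>+y. ennreal \<bar>f (y(i := b))\<bar> \<partial>PM (\<lambda>_. bernoulli_pmf p)) < \<infinity>"
proof -
  let ?B = "PM (\<lambda>_. bernoulli_pmf p)"
  let ?X = "\<integral>\<^sup>+y. ennreal \<bar>f (y(i := b))\<bar> \<partial>?B"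
  have hm: "(\<lambda>y. ennreal \<bar>f (y(i := b))\<bar>) \<in> borel_measurable ?B" by measurable
  have "(\<integral>\<^sup>+y. indicator {b} (y i) * ennreal \<bar>f (y(i := b))\<bar> \<partial>?B)
      = (\<integral>\<^sup>+c. indicator {b} c \<partial>measure_pmf (bernoulli_pmf p)) * ?X"
    by (rule inv_split[OF hm, where u="indicator {b}"]) simp
  also have "(\<integral>\<^sup>+c. indicator {b} c \<partial>measure_pmf (bernoulli_pmf p)) = ennreal (pmf (bernoulli_pmf p) b)"
    by (simp add: emeasure_pmf_single)
  finally have eq: "(\<integral>\<^sup>+y. indicator {b} (y i) * ennreal \<bar>f (y(i := b))\<bar> \<partial>?B) = ennreal (pmf (bernoulli_pmf p) b) * ?X" .
  have "(\<integral>\<^sup>+y. indicator {b} (y i) * ennreal \<bar>f (y(i := b))\<bar> \<partial>?B) \<le> (\<integral>\<^sup>+y. ennreal \<bar>f y\<bar> \<partial>?B)"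
    by (intro nn_integral_mono) (auto simp: indicator_def fun_upd_idem)
  also have "\<dots> < \<infinity>"
    using fi unfolding integrable_iff_bounded bern_PM by simp
  finally have "ennreal (pmf (bernoulli_pmf p) b) * ?X < \<infinity>" using eq by simp
  moreover have "pmf (bernoulli_pmf p) b > 0" using p0 p1 by (cases b) auto
  ultimately show ?thesis
    by (auto simp: ennreal_mult_less_top top_unique)
qed

lemma K_R_nn:
  "(\<integral>\<^sup>+y. ennreal \<bar>f (y(i := b))\<bar> \<partial>PM (\<lambda>j. coord_kernel p t (x j)))
     = (\<integral>\<^sup>+X. ennreal \<bar>f (X(i := b))\<bar> \<partial>RM i (\<lambda>j. coord_kernel p t (x j)))"
proof -
  have hm: "(\<lambda>y. ennreal \<bar>f (y(i := b))\<bar>) \<in> borel_measurable (PM (\<lambda>j. coord_kernel p t (x j)))" by measurable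
  show ?thesis
    by (subst nn_split[OF hm, of i]) (simp add: measure_pmf.emeasure_space_1)
qed

lemma AE_slices:
  "AE x in PM (\<lambda>_. bernoulli_pmf p). \<forall>b. integrable (RM i (\<lambda>j. coord_kernel p t (x j))) (\<lambda>X. f (X(i := b)))"
proof -
  let ?B = "PM (\<lambda>_. bernoulli_pmf p)"
  have one: "AE x in ?B. integrable (RM i (\<lambda>j. coord_kernel p t (x j))) (\<lambda>X. f (X(i := b)))" for b
  proof -
    have hm: "(\<lambda>y. ennreal \<bar>f (y(i := b))\<bar>) \<in> borel_measurable ?B" by measurable
    have km: "(\<lambda>x. PM (\<lambda>j. coord_kernel p t (x j))) \<in> measurable ?B (subprob_algebra ?B)"
      by (rule kernel_measurable)
    have "(\<integral>\<^sup>+x. \<integral>\<^sup>+y. ennreal \<bar>f (y(i := b))\<bar> \<partial>PM (\<lambda>j. coord_kernel p t (x j)) \<partial>?B)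
        = (\<integral>\<^sup>+y. ennreal \<bar>f (y(i := b))\<bar> \<partial>bind ?B (\<lambda>x. PM (\<lambda>j. coord_kernel p t (x j))))"
      by (rule nn_integral_bind[OF hm km, symmetric])
    also have "bind ?B (\<lambda>x. PM (\<lambda>j. coord_kernel p t (x j))) = ?B"
      by (rule stationary) (rule bind_ck, use p0 p1 t0 in auto)
    finally have eqX: "(\<integral>\<^sup>+x. \<integral>\<^sup>+y. ennreal \<bar>f (y(i := b))\<bar> \<partial>PM (\<lambda>j. coord_kernel p t (x j)) \<partial>?B) = (\<integral>\<^sup>+y. ennreal \<bar>f (y(i := b))\<bar> \<partial>?B)" .
    have fin: "(\<integral>\<^sup>+y. ennreal \<bar>f (y(i := b))\<bar> \<partial>?B) \<noteq> \<infinity>"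
      using f_int[of b] by (simp only: less_top)
    have "(\<integral>\<^sup>+x. \<integral>\<^sup>+y. ennreal \<bar>f (y(i := b))\<bar> \<partial>PM (\<lambda>j. coord_kernel p t (x j)) \<partial>?B) \<noteq> \<infinity>"
      unfolding eqX by (rule fin)
    then have "AE x in ?B. (\<integral>\<^sup>+y. ennreal \<bar>f (y(i := b))\<bar> \<partial>PM (\<lambda>j. coord_kernel p t (x j))) \<noteq> \<infinity>"
      by (intro nn_integral_PInf_AE measurable_compose[OF km nn_integral_measurable_subprob_algebra[OF hm]])
    then show ?thesis
    proof (rule AE_mp, intro AE_I2 impI)
      fix x assume "(\<integral>\<^sup>+y. ennreal \<bar>f (y(i := b))\<bar> \<partial>PM (\<lambda>j. coord_kernel p t (x j))) \<noteq> \<infinity>"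
      then have "(\<integral>\<^sup>+X. ennreal \<bar>f (X(i := b))\<bar> \<partial>RM i (\<lambda>j. coord_kernel p t (x j))) < \<infinity>"
        by (simp add: K_R_nn less_top)
      then show "integrable (RM i (\<lambda>j. coord_kernel p t (x j))) (\<lambda>X. f (X(i := b)))"
        by (intro integrableI_bounded) (simp_all)
    qed
  qed
  from one[of True] one[of False] show ?thesis
  proof (eventually_elim)
    case (elim x)
    then show ?case by (metis (full_types))
  qed
qed

end

context
  fixes p t :: real and i :: nat and f :: "(nat \<Rightarrow> bool) \<Rightarrow> real"
  assumes p0: "0 < p" and p1: "p < 1" and t0: "0 \<le> t"
    and fm: "f \<in> borel_measurable (bern_prod p)"
    and fi: "integrable (bern_prod p) f"
begin

lemmas Df_def' = Df_def[OF p0 p1 t0 fm]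
lemmas Df_upd'[simp] = Df_upd[OF p0 p1 t0 fm]
lemmas Df_meas'[measurable] = Df_meas[OF p0 p1 t0 fm]
lemmas Df_measR'[measurable] = Df_measR[OF p0 p1 t0 fm]
lemmas fQ''[measurable] = fQ'[OF p0 p1 t0 fm fi]
lemmas fupdR''[measurable] = fupd_measR'[OF p0 p1 t0 fm fi]
lemmas Pt_Df_R' = Pt_Df_R[OF p0 p1 t0 fm]
lemmas nabla_eq' = nabla_eq[OF p0 p1 t0 fm]
lemmas nabla_meas'[measurable] = nabla_meas[OF p0 p1 t0 fm]

lemma R_upd_if: "RM i (\<lambda>j. coord_kernel p t (if j = i then c else x j)) = RM i (\<lambda>j. coord_kernel p t (x j))"
  by (rule RM_cong) auto

lemma comm:
  assumes sl: "\<And>b. integrable (RM i (\<lambda>j. coord_kernel p t (x j))) (\<lambda>X. f (X(i := b)))"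
  shows "nabla p i (Pt p t f) x = exp (- t) * (p - pr i x) * Pt p t (Df i f) x"
proof -
  let ?R = "RM i (\<lambda>j. coord_kernel p t (x j))"
  define \<phi> where "\<phi> b = (\<integral>X. f (X(i := b)) \<partial>?R)" for b
  have pmf1: "pmf (coord_kernel p t c) True = exp (-t) * (if c then 1 else 0) + (1 - exp (-t)) * p"
    "pmf (coord_kernel p t c) False = exp (-t) * (if c then 0 else 1) + (1 - exp (-t)) * (1 - p)" for c
    using p0 p1 t0 by (simp_all add: pmf_ck)
  have Ptc: "Pt p t f (x(i := c)) = (\<Sum>b\<in>UNIV. pmf (coord_kernel p t c) b * \<phi> b)" for c
  proof -
    have "Pt p t f (x(i := c)) = (\<Sum>b\<in>UNIV. pmf (coord_kernel p t ((x(i := c)) i)) b * (\<integral>X. f (X(i := b)) \<partial>RM i (\<lambda>j. coord_kernel p t ((x(i := c)) j))))"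
      unfolding Pt_def rk_PM by (rule slices_integral(2)) (simp_all add: R_upd[OF p0 p1 t0 fm] R_upd_if sl)
    then show ?thesis by (simp add: R_upd[OF p0 p1 t0 fm] R_upd_if \<phi>_def)
  qed
  have PtD: "Pt p t (Df i f) x = \<phi> True - \<phi> False"
  proof -
    have "Pt p t (Df i f) x = (\<integral>X. Df i f X \<partial>?R)" by (rule Pt_Df_R')
    also have "\<dots> = \<phi> True - \<phi> False"
      unfolding \<phi>_def Df_def' by (rule Bochner_Integration.integral_diff[OF sl sl])
    finally show ?thesis .
  qed
  have x: "x(i := x i) = x" by simp
  have "nabla p i (Pt p t f) x = p * Pt p t f (x(i := True)) + (1 - p) * Pt p t f (x(i := False)) - Pt p t f (x(i := x i))"
    using p0 p1 by (simp add: nabla_formula)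
  also have "\<dots> = exp (- t) * (p - pr i x) * (\<phi> True - \<phi> False)"
    unfolding Ptc by (cases "x i") (simp_all add: UNIV_bool pmf1 pr_def algebra_simps)
  finally show ?thesis by (simp add: PtD)
qed

lemma G_meas: "(\<lambda>x. Pt p t (Df i f) x) \<in> borel_measurable (PM (\<lambda>_. bernoulli_pmf p))"
  unfolding Pt_def rk_PM
  by (rule measurable_compose[OF kernel_measurable integral_measurable_subprob_algebra[OF Df_meas']])

lemma G_upd: "Pt p t (Df i f) (x(i := c)) = Pt p t (Df i f) x"
  by (simp add: Pt_Df_R' R_upd[OF p0 p1 t0 fm] R_upd_if)

end

lemma ennabs: assumes [measurable]: "g \<in> borel_measurable M" shows "(\<lambda>y. ennreal \<bar>g y\<bar>) \<in> borel_measurable M"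
  by measurable

context
  fixes p t :: real and i :: nat and f :: "(nat \<Rightarrow> bool) \<Rightarrow> real"
  assumes p0: "0 < p" and p1: "p < 1" and t0: "0 \<le> t"
    and fm: "f \<in> borel_measurable (bern_prod p)"
    and fi: "integrable (bern_prod p) f"
begin

lemmas Df_def'' = Df_def[OF p0 p1 t0 fm]
lemmas Df_upd''[simp] = Df_upd[OF p0 p1 t0 fm]
lemmas Df_meas''[measurable] = Df_meas[OF p0 p1 t0 fm]
lemmas fQ3[measurable] = fQ'[OF p0 p1 t0 fm fi]
lemmas fupd3[measurable] = fupd_meas'[OF p0 p1 t0 fm fi]
lemmas nabla_eq'' = nabla_eq[OF p0 p1 t0 fm]
lemmas nabla_meas''[measurable] = nabla_meas[OF p0 p1 t0 fm]
lemmas G_meas'[measurable] = G_meas[OF p0 p1 t0 fm fi]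

lemma infl_bound: "influence p i (Pt p t f) \<le> exp (- t) * influence p i f"
proof -
  let ?B = "PM (\<lambda>_. bernoulli_pmf p)"
  let ?G = "\<lambda>x. Pt p t (Df i f) x"
  define u where "u c = ennreal \<bar>p - (if c then 1 else 0)\<bar>" for c
  have um: "(\<lambda>x. u (x i)) \<in> borel_measurable ?B" by (rule comp_meas)
  have nabla_bound: "\<bar>nabla p i f y\<bar> \<le> \<bar>f (y(i := True))\<bar> + \<bar>f (y(i := False))\<bar>" for y
  proof -
    have a1: "\<bar>p - pr i y\<bar> \<le> 1" using p0 p1 by (auto simp: pr_def)
    have "\<bar>nabla p i f y\<bar> = \<bar>p - pr i y\<bar> * \<bar>Df i f y\<bar>" by (simp add: nabla_eq'' abs_mult)
    also have "\<dots> \<le> 1 * \<bar>Df i f y\<bar>" by (rule mult_right_mono[OF a1]) simp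
    also have "\<dots> \<le> \<bar>f (y(i := True))\<bar> + \<bar>f (y(i := False))\<bar>" by (simp add: Df_def'' abs_triangle_ineq4)
    finally show ?thesis .
  qed
  have nf_fin: "(\<integral>\<^sup>+y. ennreal \<bar>nabla p i f y\<bar> \<partial>?B) < \<infinity>"
  proof -
    have "(\<integral>\<^sup>+y. ennreal \<bar>nabla p i f y\<bar> \<partial>?B) \<le> (\<integral>\<^sup>+y. ennreal \<bar>f (y(i := True))\<bar> + ennreal \<bar>f (y(i := False))\<bar> \<partial>?B)"
      by (intro nn_integral_mono) (simp add: ennreal_plus[symmetric] del: ennreal_plus add: nabla_bound)
    also have "\<dots> = (\<integral>\<^sup>+y. ennreal \<bar>f (y(i := True))\<bar> \<partial>?B) + (\<integral>\<^sup>+y. ennreal \<bar>f (y(i := False))\<bar> \<partial>?B)"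
      by (rule nn_integral_add) (rule ennabs[OF fupd3])+
    also have "\<dots> < \<infinity>"
      using f_int[OF p0 p1 t0 fm fi, of i True] f_int[OF p0 p1 t0 fm fi, of i False] by simp
    finally show ?thesis .
  qed
  have infl_f: "influence p i f = enn2real (\<integral>\<^sup>+y. ennreal \<bar>nabla p i f y\<bar> \<partial>?B)"
    unfolding influence_def bern_PM by (rule integral_eq_nn_integral) (rule borel_measurable_abs[OF nabla_meas''], simp)
  have eqD: "(\<integral>\<^sup>+c. u c \<partial>measure_pmf (bernoulli_pmf p)) * (\<integral>\<^sup>+y. ennreal \<bar>Df i f y\<bar> \<partial>?B)
      = (\<integral>\<^sup>+y. ennreal \<bar>nabla p i f y\<bar> \<partial>?B)"
  proof -
    have "(\<integral>\<^sup>+y. u (y i) * ennreal \<bar>Df i f y\<bar> \<partial>?B) = (\<integral>\<^sup>+c. u c \<partial>measure_pmf (bernoulli_pmf p)) * (\<integral>\<^sup>+y. ennreal \<bar>Df i f y\<bar> \<partial>?B)"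
      by (rule inv_split[where u=u]) (rule ennabs[OF Df_meas''], simp)
    moreover have "u (y i) * ennreal \<bar>Df i f y\<bar> = ennreal \<bar>nabla p i f y\<bar>" for y
      by (simp add: u_def nabla_eq'' pr_def abs_mult ennreal_mult)
    ultimately show ?thesis by simp
  qed
  have Gb: "(\<integral>\<^sup>+x. ennreal \<bar>?G x\<bar> \<partial>?B) \<le> (\<integral>\<^sup>+y. ennreal \<bar>Df i f y\<bar> \<partial>?B)"
  proof -
    have km: "(\<lambda>x. PM (\<lambda>j. coord_kernel p t (x j))) \<in> measurable ?B (subprob_algebra ?B)"
      by (rule kernel_measurable)
    have "(\<integral>\<^sup>+x. ennreal \<bar>?G x\<bar> \<partial>?B) \<le> (\<integral>\<^sup>+x. \<integral>\<^sup>+y. ennreal \<bar>Df i f y\<bar> \<partial>PM (\<lambda>j. coord_kernel p t (x j)) \<partial>?B)"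
    proof (intro nn_integral_mono)
      fix x
      show "ennreal \<bar>?G x\<bar> \<le> (\<integral>\<^sup>+y. ennreal \<bar>Df i f y\<bar> \<partial>PM (\<lambda>j. coord_kernel p t (x j)))"
      proof (cases "integrable (PM (\<lambda>j. coord_kernel p t (x j))) (Df i f)")
        case True
        then show ?thesis
          using integral_norm_bound_ennreal[OF True] by (simp add: Pt_def rk_PM)
      next
        case False
        then show ?thesis by (simp add: Pt_def rk_PM not_integrable_integral_eq)
      qed
    qed
    also have "\<dots> = (\<integral>\<^sup>+y. ennreal \<bar>Df i f y\<bar> \<partial>bind ?B (\<lambda>x. PM (\<lambda>j. coord_kernel p t (x j))))"
      by (rule nn_integral_bind[symmetric, OF ennabs[OF Df_meas''] km])
    also have "bind ?B (\<lambda>x. PM (\<lambda>j. coord_kernel p t (x j))) = ?B"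
      by (rule stationary) (rule bind_ck, use p0 p1 t0 in auto)
    finally show ?thesis .
  qed
  show ?thesis
  proof (cases "integrable ?B (\<lambda>x. \<bar>nabla p i (Pt p t f) x\<bar>)")
    case False
    then have "influence p i (Pt p t f) = 0"
      unfolding influence_def bern_PM by (rule not_integrable_integral_eq)
    moreover have "0 \<le> influence p i f"
      unfolding influence_def by (rule Bochner_Integration.integral_nonneg) simp
    ultimately show ?thesis by simp
  next
    case True
    have m: "(\<lambda>x. \<bar>nabla p i (Pt p t f) x\<bar>) \<in> borel_measurable ?B"
      using True by (rule borel_measurable_integrable)
    have infl_P: "influence p i (Pt p t f) = enn2real (\<integral>\<^sup>+x. ennreal \<bar>nabla p i (Pt p t f) x\<bar> \<partial>?B)"
      unfolding influence_def bern_PM by (rule integral_eq_nn_integral[OF m]) simp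
    have "(\<integral>\<^sup>+x. ennreal \<bar>nabla p i (Pt p t f) x\<bar> \<partial>?B) = (\<integral>\<^sup>+x. ennreal (exp (- t)) * (u (x i) * ennreal \<bar>?G x\<bar>) \<partial>?B)"
    proof (rule nn_integral_cong_AE)
      show "AE x in ?B. ennreal \<bar>nabla p i (Pt p t f) x\<bar> = ennreal (exp (- t)) * (u (x i) * ennreal \<bar>?G x\<bar>)"
        using AE_slices[OF p0 p1 t0 fm fi, of i]
      proof eventually_elim
        case (elim x)
        then have "nabla p i (Pt p t f) x = exp (- t) * (p - pr i x) * ?G x"
          by (intro comm[OF p0 p1 t0 fm fi]) auto
        then show ?case by (simp add: u_def pr_def abs_mult ennreal_mult mult.assoc)
      qed
    qed
    also have "\<dots> = ennreal (exp (- t)) * (\<integral>\<^sup>+x. u (x i) * ennreal \<bar>?G x\<bar> \<partial>?B)"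
      by (rule nn_integral_cmult) (rule borel_measurable_times_ennreal[OF um ennabs[OF G_meas']])
    also have "(\<integral>\<^sup>+x. u (x i) * ennreal \<bar>?G x\<bar> \<partial>?B) = (\<integral>\<^sup>+c. u c \<partial>measure_pmf (bernoulli_pmf p)) * (\<integral>\<^sup>+x. ennreal \<bar>?G x\<bar> \<partial>?B)"
      by (rule inv_split[where u=u]) (rule ennabs[OF G_meas'], simp add: G_upd[OF p0 p1 t0 fm fi])
    also have "\<dots> \<le> (\<integral>\<^sup>+c. u c \<partial>measure_pmf (bernoulli_pmf p)) * (\<integral>\<^sup>+y. ennreal \<bar>Df i f y\<bar> \<partial>?B)"
      by (rule mult_left_mono[OF Gb]) simp
    also note eqD
    finally have le: "(\<integral>\<^sup>+x. ennreal \<bar>nabla p i (Pt p t f) x\<bar> \<partial>?B) \<le> ennreal (exp (- t)) * (\<integral>\<^sup>+y. ennreal \<bar>nabla p i f y\<bar> \<partial>?B)"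
      by (simp add: mult_left_mono)
    have "influence p i (Pt p t f) \<le> enn2real (ennreal (exp (- t)) * (\<integral>\<^sup>+y. ennreal \<bar>nabla p i f y\<bar> \<partial>?B))"
      unfolding infl_P by (rule enn2real_mono[OF le]) (use nf_fin in \<open>simp add: ennreal_mult_less_top\<close>)
    also have "\<dots> = exp (- t) * influence p i f"
      by (simp add: enn2real_mult infl_f)
    finally show ?thesis .
  qed
qed

end

theorem lemma2p4:
  fixes p t :: real and i :: nat and f :: "(nat \<Rightarrow> bool) \<Rightarrow> real"
  assumes "0 < p" "p < 1" "0 \<le> t" "f \<in> L2 p"
  shows "(AE x in bern_prod p.
            Pt p t (nabla p i f) x
              = exp (- t) * (p - pr i x) * Pt p t (\<lambda>y. nabla p i f y / (p - pr i y)) x)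
       \<and> influence p i (Pt p t f) \<le> 2 * exp (- t) * max p (1 - p) * influence p i f"
proof -
  have fm: "f \<in> borel_measurable (bern_prod p)" and f2: "integrable (bern_prod p) (\<lambda>x. (f x)\<^sup>2)"
    using assms(4) by (auto simp: L2_def)
  have fi: "integrable (bern_prod p) f"
  proof -
    interpret prob_space "bern_prod p" unfolding bern_PM by (rule prob_space_PM)
    show ?thesis by (rule square_integrable_imp_integrable[OF fm f2])
  qed
  have eqD: "(\<lambda>y. nabla p i f y / (p - pr i y)) = Df i f"
    by (rule ext) (rule nablaD[OF assms(1-3) fm])
  have A: "AE x in bern_prod p.
            Pt p t (nabla p i f) x
              = exp (- t) * (p - pr i x) * Pt p t (\<lambda>y. nabla p i f y / (p - pr i y)) x"
    by (rule AE_I2) (simp only: eqD part1[OF assms(1-3) fm])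
  have I0: "0 \<le> influence p i f"
    unfolding influence_def by (rule Bochner_Integration.integral_nonneg) simp
  have "influence p i (Pt p t f) \<le> exp (- t) * influence p i f"
    by (rule infl_bound[OF assms(1-3) fm fi])
  also have "\<dots> \<le> 2 * exp (- t) * max p (1 - p) * influence p i f"
  proof (rule mult_right_mono[OF _ I0])
    have "1 \<le> 2 * max p (1 - p)" by (simp add: max_def)
    then have "exp (- t) * 1 \<le> exp (- t) * (2 * max p (1 - p))"
      by (rule mult_left_mono) simp
    then show "exp (- t) \<le> 2 * exp (- t) * max p (1 - p)" by (simp add: algebra_simps)
  qed
  finally show ?thesis using A by blast
qed

end
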